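(* Let $\mathcal N$ be a ground set with $|\mathcal N|=n$, $f:2^{\mathcal N}\to\mathbb R$ monotone submodular, $k\ge1$ an integer, $0<\epsilon<1/2$, and $O$ an optimal solution of size $k$ to $\max\{f(S):|S|\le k\}$. Suppose $\textsc{LowAdapLinearSeq}(f,\mathcal N,k,\epsilon)$ (described in the context) terminates successfully, and let $A$ and $V$ be the final values of the sets $A$ and $V$ maintained by the algorithm. Then $f(O\setminus V)\le2f(A)$.
   Context: $f$ is submodular if $f(T\cup\{x\})-f(T)\le f(S\cup\{x\})-f(S)$ for all $S\subseteq T\subseteq\mathcal N$, $x\notin T$; monotone if $f(S)\le f(T)$ for $S\subseteq T$. $\Delta(x\mid S)=f(S\cup\{x\})-f(S)$, $\Delta(T\mid S)=f(S\cup T)-f(S)$. $\log$ is natural log. Algorithm $\textsc{LowAdapLinearSeq}(f,\mathcal N,k,\epsilon)$: Let $a=\arg\max_{u\in\mathcal N}f(\{u\})$; $A\leftarrow\{a\}$, $V\leftarrow\mathcal N$, $\beta=\epsilon/(16\log(8/(1-e^{-\epsilon/2})))$, $\ell=\lceil4(1+1/(\beta\epsilon))\log(n/k)\rceil$. For $j=1,\dots,\ell$: (i) $V\leftarrow\{x\in V:\Delta(x\mid A)\ge f(A)/k\}$; (ii) if $|V|\le k$, break; (iii) let $(v_1,\dots,v_{|V|})$ be a uniformly random permutation of $V$; (iv) $\Lambda=\{\lfloor(1+\epsilon)^u\rfloor:1\le\lfloor(1+\epsilon)^u\rfloor\le k,u\in\mathbb N\}\cup\{\lfloor k+u\epsilon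 k\rfloor:\lfloor k+u\epsilon k\rfloor\le|V|,u\in\mathbb N\}\cup\{|V|\}$ with elements $\lambda_1<\lambda_2<\cdots$, $\lambda_0=0$, $T_\lambda=\{v_1,\dots,v_\lambda\}$, $T'_{\lambda_i}=T_{\lambda_i}\setminus T_{\lambda_{i-1}}$; (v) in parallel set $B[\lambda_i]=\text{true}$ iff $\Delta(T'_{\lambda_i}\mid A\cup T_{\lambda_{i-1}})/|T'_{\lambda_i}|\ge(1-\epsilon)f(A\cup T_{\lambda_{i-1}})/k$; (vi) $\lambda^*$ is the largest $\lambda_i\in\Lambda$ with $B[\lambda_i]=\text{false}$ and either ($\lambda_i\le k$ and $B[\lambda_1],\dots,B[\lambda_{i-1}]$ all true) or ($\lambda_i>k$ and some $m\ge1$ has $|\bigcup_{u=m}^{i-1}T'_{\lambda_u}|\ge k$ and $B[\lambda_m],\dots,B[\lambda_{i-1}]$ all true); (vii) $A\leftarrow A\cup T_{\lambda^*}$. After the loop: if $|V|>k$ return failure; otherwise (successful termination) let $A'$ be the last $k$ elements added to $A$ and return $\arg\max\{f(A'),f(V)\}$. *)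

theory Defs
  imports Complex_Main
begin

definition monotone_sf :: "'a set \<Rightarrow> ('a set \<Rightarrow> real) \<Rightarrow> bool" where
  "monotone_sf N f \<longleftrightarrow> (\<forall>S T. S \<subseteq> T \<and> T \<subseteq> N \<longrightarrow> f S \<le> f T)"

definition submodular :: "'a set \<Rightarrow> ('a set \<Rightarrow> real) \<Rightarrow> bool" where
  "submodular N f \<longleftrightarrow> (\<forall>S T x. S \<subseteq> T \<and> T \<subseteq> N \<and> x \<in> N \<and> x \<notin> T \<longrightarrow>
      f (T \<union> {x}) - f T \<le> f (S \<union> {x}) - f S)"

definition marg :: "('a set \<Rightarrow> real) \<Rightarrow> 'a \<Rightarrow> 'a set \<Rightarrow> real" where
  "marg f x S = f (S \<union> {x}) - f S"

definition margset :: "('a set \<Rightarrow> real) \<Rightarrow> 'a set \<Rightarrow> 'a set \<Rightarrow> real" where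
  "margset f T S = f (S \<union> T) - f S"

definition beta_par :: "real \<Rightarrow> real" where
  "beta_par eps = eps / (16 * ln (8 / (1 - exp (- eps / 2))))"

definition ell_par :: "nat \<Rightarrow> nat \<Rightarrow> real \<Rightarrow> nat" where
  "ell_par n k eps = nat \<lceil>4 * (1 + 1 / (beta_par eps * eps)) * ln (real n / real k)\<rceil>"

definition Lam :: "nat \<Rightarrow> real \<Rightarrow> nat \<Rightarrow> nat set" where
  "Lam k eps m =
     {l. \<exists>u::nat. l = nat \<lfloor>(1 + eps) ^ u\<rfloor> \<and> 1 \<le> \<lfloor>(1 + eps) ^ u\<rfloor> \<and> \<lfloor>(1 + eps) ^ u\<rfloor> \<le> int k}
   \<union> {l. \<exists>u::nat. l = nat \<lfloor>real k + real u * eps * real k\<rfloor> \<and> \<lfloor>real k + real u * eps * real k\<rfloor> \<le> int m}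
   \<union> {m}"

definition prevL :: "nat set \<Rightarrow> nat \<Rightarrow> nat" where
  "prevL L l = Max ({0} \<union> {\<mu> \<in> L. \<mu> < l})"

text \<open>T_lambda = {v_1,...,v_lambda} for the permutation given as a list vs.\<close>
definition Tpre :: "'a list \<Rightarrow> nat \<Rightarrow> 'a set" where
  "Tpre vs l = set (take l vs)"

definition Tblk :: "nat set \<Rightarrow> 'a list \<Rightarrow> nat \<Rightarrow> 'a set" where
  "Tblk L vs l = Tpre vs l - Tpre vs (prevL L l)"

definition Bval :: "('a set \<Rightarrow> real) \<Rightarrow> nat \<Rightarrow> real \<Rightarrow> 'a set \<Rightarrow> nat set \<Rightarrow> 'a list \<Rightarrow> nat \<Rightarrow> bool" where
  "Bval f k eps A L vs l \<longleftrightarrow>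
     margset f (Tblk L vs l) (A \<union> Tpre vs (prevL L l)) / real (card (Tblk L vs l))
       \<ge> (1 - eps) * f (A \<union> Tpre vs (prevL L l)) / real k"

definition lstar_cand :: "('a set \<Rightarrow> real) \<Rightarrow> nat \<Rightarrow> real \<Rightarrow> 'a set \<Rightarrow> nat set \<Rightarrow> 'a list \<Rightarrow> nat \<Rightarrow> bool" where
  "lstar_cand f k eps A L vs l \<longleftrightarrow>
     l \<in> L \<and> \<not> Bval f k eps A L vs l \<and>
     ((l \<le> k \<and> (\<forall>\<mu>\<in>L. \<mu> < l \<longrightarrow> Bval f k eps A L vs \<mu>)) \<or>
      (l > k \<and> (\<exists>m\<in>L. m < l \<and>
          card (\<Union>{Tblk L vs \<mu> | \<mu>. \<mu> \<in> L \<and> m \<le> \<mu> \<and> \<mu> < l}) \<ge> k \<and>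
          (\<forall>\<mu>\<in>L. m \<le> \<mu> \<and> \<mu> < l \<longrightarrow> Bval f k eps A L vs \<mu>))))"

definition is_lstar :: "('a set \<Rightarrow> real) \<Rightarrow> nat \<Rightarrow> real \<Rightarrow> 'a set \<Rightarrow> nat set \<Rightarrow> 'a list \<Rightarrow> nat \<Rightarrow> bool" where
  "is_lstar f k eps A L vs l \<longleftrightarrow>
     lstar_cand f k eps A L vs l \<and> (\<forall>l'. lstar_cand f k eps A L vs l' \<longrightarrow> l' \<le> l)"

definition filt :: "('a set \<Rightarrow> real) \<Rightarrow> nat \<Rightarrow> 'a set \<Rightarrow> 'a set \<Rightarrow> 'a set" where
  "filt f k A V = {x \<in> V. marg f x A \<ge> f A / real k}"

text \<open>reach f N k eps j A V: some execution (some choice of maximiser a and of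
  the random permutations) completes j loop iterations without breaking, with state (A,V).\<close>
inductive reach :: "('a set \<Rightarrow> real) \<Rightarrow> 'a set \<Rightarrow> nat \<Rightarrow> real \<Rightarrow> nat \<Rightarrow> 'a set \<Rightarrow> 'a set \<Rightarrow> bool"
  for f N k eps where
  init: "a \<in> N \<Longrightarrow> (\<forall>u\<in>N. f {u} \<le> f {a}) \<Longrightarrow> reach f N k eps 0 {a} N"
| step: "reach f N k eps j A V \<Longrightarrow> j < ell_par (card N) k eps \<Longrightarrow>
         card (filt f k A V) > k \<Longrightarrow>
         distinct vs \<Longrightarrow> set vs = filt f k A V \<Longrightarrow>
         is_lstar f k eps A (Lam k eps (card (filt f k A V))) vs l \<Longrightarrow>
         reach f N k eps (Suc j) (A \<union> Tpre vs l) (filt f k A V)"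

text \<open>Successful termination with final sets A and V: in some iteration j+1 \<le> ell the
  filtered set has size at most k and the loop breaks.\<close>
definition success_final :: "('a set \<Rightarrow> real) \<Rightarrow> 'a set \<Rightarrow> nat \<Rightarrow> real \<Rightarrow> 'a set \<Rightarrow> 'a set \<Rightarrow> bool" where
  "success_final f N k eps A V \<longleftrightarrow>
     (\<exists>j V0. reach f N k eps j A V0 \<and> j < ell_par (card N) k eps \<and>
             V = filt f k A V0 \<and> card V \<le> k)"

end

theory Submission
  imports Defs
begin

lemma mono_app: "monotone_sf N f \<Longrightarrow> S \<subseteq> T \<Longrightarrow> T \<subseteq> N \<Longrightarrow> f S \<le> f T"
  unfolding monotone_sf_def by blast

lemma sub_app:
  assumes "submodular N f" "S \<subseteq> T" "T \<subseteq> N" "x \<in> N" "x \<notin> T"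
  shows "marg f x T \<le> marg f x S"
  using assms(1)[unfolded submodular_def, rule_format, OF conjI[OF assms(2) conjI[OF assms(3) conjI[OF assms(4) assms(5)]]]]
  unfolding marg_def .

lemma submod_sum:
  assumes sub: "submodular N f" and fin: "finite S"
  shows "S \<subseteq> N \<Longrightarrow> A \<subseteq> N \<Longrightarrow> S \<inter> A = {} \<Longrightarrow> f (A \<union> S) - f A \<le> (\<Sum>x\<in>S. marg f x A)"
  using fin
proof (induction S rule: finite_induct)
  case empty then show ?case by simp
next
  case (insert x S)
  have sN: "S \<subseteq> N" and xN: "x \<in> N" and xS: "x \<notin> A \<union> S" and dS: "S \<inter> A = {}"
    using insert.prems insert.hyps by auto
  have ASN: "A \<union> S \<subseteq> N" using sN insert.prems(2) by blast
  have m: "marg f x (A \<union> S) \<le> marg f x A"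
    by (rule sub_app[OF sub _ ASN xN xS]) blast
  have ih: "f (A \<union> S) - f A \<le> (\<Sum>x\<in>S. marg f x A)"
    using insert.IH[OF sN insert.prems(2) dS] .
  have e1: "A \<union> insert x S = (A \<union> S) \<union> {x}" by blast
  have e2: "(\<Sum>y\<in>insert x S. marg f y A) = marg f x A + (\<Sum>y\<in>S. marg f y A)"
    using insert.hyps by simp
  show ?case unfolding e1 e2 using m ih unfolding marg_def by linarith
qed

lemma ell_pos:
  assumes "ell_par n k eps > 0" "k \<ge> 1" "0 < eps"
  shows "k < n"
proof (rule ccontr)
  assume "\<not> k < n"
  hence nk: "real n \<le> real k" by simp
  have "ln (real n / real k) \<le> 0"
  proof (cases "n = 0")
    case True then show ?thesis by simp
  next
    case False
    then show ?thesis using nk assms(2) by (simp add: ln_div)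
  qed
  moreover have "beta_par eps > 0"
  proof -
    have e1: "exp (- eps / 2) < 1" using assms(3) by simp
    have e0: "exp (- eps / 2) > 0" by simp
    have d0: "0 < 1 - exp (- eps / 2)" using e1 by simp
    have "1 - exp (- eps / 2) < 8" using e0 by linarith
    hence "8 / (1 - exp (- eps / 2)) > 1" using d0 by (simp add: less_divide_eq)
    hence "ln (8 / (1 - exp (- eps / 2))) > 0" by (rule ln_gt_zero)
    thus ?thesis unfolding beta_par_def using assms(3) by simp
  qed
  hence "4 * (1 + 1 / (beta_par eps * eps)) > 0" using assms(3) by (simp add: add_pos_pos)
  ultimately have "4 * (1 + 1 / (beta_par eps * eps)) * ln (real n / real k) \<le> 0"
    by (simp add: mult_nonneg_nonpos)
  hence "ell_par n k eps = 0" unfolding ell_par_def by simp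
  with assms(1) show False by simp
qed

lemma invariant:
  assumes mono: "monotone_sf N f" and sub: "submodular N f" and k1: "k \<ge> 1"
  shows "reach f N k eps j A V \<Longrightarrow> A \<subseteq> N \<and> V \<subseteq> N \<and>
     (\<forall>x\<in>N - V. x \<notin> A \<longrightarrow> marg f x A < f A / real k) \<and>
     (f A < 0 \<longrightarrow> V = N \<and> (j = 0 \<or> k < card N))"
proof (induction rule: reach.induct)
  case (init a) then show ?case by auto
next
  case (step j A V vs l)
  have IA: "A \<subseteq> N" using step.IH by (rule conjunct1)
  have IV: "V \<subseteq> N" using step.IH[THEN conjunct2] by (rule conjunct1)
  have Ix: "\<forall>x\<in>N - V. x \<notin> A \<longrightarrow> marg f x A < f A / real k"
    using step.IH[THEN conjunct2, THEN conjunct2] by (rule conjunct1)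
  have In: "f A < 0 \<longrightarrow> V = N \<and> (j = 0 \<or> k < card N)"
    using step.IH[THEN conjunct2, THEN conjunct2] by (rule conjunct2)
  let ?F = "filt f k A V"
  let ?A' = "A \<union> Tpre vs l"
  have FV: "?F \<subseteq> V" unfolding filt_def by (rule Collect_subset)
  have T: "Tpre vs l \<subseteq> ?F" unfolding Tpre_def using set_take_subset[of l vs] step.hyps(5) by simp
  have FN: "?F \<subseteq> N" using FV IV by (rule subset_trans)
  have AN: "?A' \<subseteq> N" using IA T FN by blast
  have fA: "f A \<le> f ?A'" by (rule mono_app[OF mono _ AN]) (rule Un_upper1)
  have c3: "\<forall>x\<in>N - ?F. x \<notin> ?A' \<longrightarrow> marg f x ?A' < f ?A' / real k"
  proof (intro ballI impI)
    fix x assume x: "x \<in> N - ?F" "x \<notin> ?A'"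
    have xA: "x \<notin> A" using x(2) by simp
    have "marg f x A < f A / real k"
    proof (cases "x \<in> V")
      case True
      hence "\<not> (marg f x A \<ge> f A / real k)" using x(1) unfolding filt_def by simp
      then show ?thesis by simp
    next
      case False
      hence "x \<in> N - V" using x(1) by simp
      then show ?thesis using Ix xA by simp
    qed
    moreover have "marg f x ?A' \<le> marg f x A"
      by (rule sub_app[OF sub _ AN]) (use x in simp_all)
    moreover have "f A / real k \<le> f ?A' / real k" using fA by (simp add: divide_right_mono)
    ultimately show "marg f x ?A' < f ?A' / real k" by linarith
  qed
  have c4: "f ?A' < 0 \<longrightarrow> ?F = N \<and> (Suc j = 0 \<or> k < card N)"
  proof
    assume "f ?A' < 0"
    hence neg: "f A < 0" using fA by linarith
    hence VN: "V = N" using In by simp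
    have ge: "\<forall>x\<in>N. marg f x A \<ge> f A / real k"
    proof
      fix x assume xN: "x \<in> N"
      have "A \<union> {x} \<subseteq> N" using IA xN by simp
      hence "f A \<le> f (A \<union> {x})" by (rule mono_app[OF mono Un_upper1])
      moreover have "f A / real k < 0" using neg k1 by (simp add: divide_neg_pos)
      ultimately show "marg f x A \<ge> f A / real k" unfolding marg_def by linarith
    qed
    have "?F = N" unfolding filt_def VN using ge by auto
    thus "?F = N \<and> (Suc j = 0 \<or> k < card N)" using step.hyps(3) by simp
  qed
  show ?case using AN FN c3 c4 by (intro conjI)
qed

theorem lemma15:
  fixes N :: "'a set" and f :: "'a set \<Rightarrow> real" and k :: nat and eps :: real
    and Opt A V :: "'a set"
  assumes "finite N"
    and "monotone_sf N f" and "submodular N f"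
    and "k \<ge> 1" and "0 < eps" and "eps < 1/2"
    and "Opt \<subseteq> N" and "card Opt = k"
    and "\<forall>S. S \<subseteq> N \<and> card S \<le> k \<longrightarrow> f S \<le> f Opt"
    and "success_final f N k eps A V"
  shows "f (Opt - V) \<le> 2 * f A"
proof -
  obtain j V0 where r: "reach f N k eps j A V0" and jl: "j < ell_par (card N) k eps"
    and VF: "V = filt f k A V0" and cV: "card V \<le> k"
    using assms(10) unfolding success_final_def by blast
  note I = invariant[OF assms(2,3,4) r]
  have AN: "A \<subseteq> N" using I by (rule conjunct1)
  have Ix: "\<forall>x\<in>N - V0. x \<notin> A \<longrightarrow> marg f x A < f A / real k"
    using I[THEN conjunct2, THEN conjunct2] by (rule conjunct1)
  have In: "f A < 0 \<longrightarrow> V0 = N \<and> (j = 0 \<or> k < card N)"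
    using I[THEN conjunct2, THEN conjunct2] by (rule conjunct2)
  have fA0: "f A \<ge> 0"
  proof (rule ccontr)
    assume "\<not> f A \<ge> 0"
    hence neg: "f A < 0" by simp
    hence V0N: "V0 = N" and jk: "j = 0 \<or> k < card N" using In by simp_all
    have ge: "\<forall>x\<in>N. marg f x A \<ge> f A / real k"
    proof
      fix x assume xN: "x \<in> N"
      have "A \<union> {x} \<subseteq> N" using AN xN by simp
      hence "f A \<le> f (A \<union> {x})" by (rule mono_app[OF assms(2) Un_upper1])
      moreover have "f A / real k < 0" using neg assms(4) by (simp add: divide_neg_pos)
      ultimately show "marg f x A \<ge> f A / real k" unfolding marg_def by linarith
    qed
    have "V = N" unfolding VF filt_def V0N using ge by auto
    hence cN: "card N \<le> k" using cV by simp
    have "k < card N"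
    proof (cases "j = 0")
      case True
      hence "ell_par (card N) k eps > 0" using jl by simp
      thus ?thesis using ell_pos assms(4,5) by blast
    next
      case False thus ?thesis using jk by simp
    qed
    thus False using cN by simp
  qed
  define S where "S = Opt - V - A"
  have finS: "finite S" using assms(1,7) S_def finite_subset by blast
  have SN: "S \<subseteq> N" using assms(7) S_def by auto
  have finO: "finite Opt" using assms(1,7) finite_subset by blast
  have "S \<subseteq> Opt" unfolding S_def by blast
  hence cS: "card S \<le> k" using card_mono[OF finO] assms(8) by simp
  have mS: "\<forall>x\<in>S. marg f x A \<le> f A / real k"
  proof
    fix x assume x: "x \<in> S"
    hence xN: "x \<in> N" "x \<notin> A" "x \<notin> V" using SN unfolding S_def by auto
    show "marg f x A \<le> f A / real k"
    proof (cases "x \<in> V0")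
      case True
      hence "\<not> (marg f x A \<ge> f A / real k)" using xN(3) unfolding VF filt_def by simp
      then show ?thesis by simp
    next
      case False
      hence "x \<in> N - V0" using xN by blast
      then show ?thesis using xN(2) Ix by (simp add: less_imp_le)
    qed
  qed
  have sub1: "Opt - V \<subseteq> A \<union> S" unfolding S_def by blast
  have sub2: "A \<union> S \<subseteq> N" using AN SN by blast
  have dis: "S \<inter> A = {}" unfolding S_def by blast
  have ck: "real (card S) * f A \<le> real k * f A"
    using cS fA0 by (intro mult_right_mono) auto
  have kp: "real k > 0" using assms(4) by simp
  have ck2: "real (card S) * f A / real k \<le> f A"
  proof -
    have "real (card S) * f A / real k \<le> real k * f A / real k"
      by (rule divide_right_mono[OF ck]) (use kp in simp)
    also have "\<dots> = f A" using kp by simp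
    finally show ?thesis .
  qed
  have "f (Opt - V) \<le> f (A \<union> S)"
    using mono_app[OF assms(2) sub1 sub2] .
  also have "\<dots> \<le> f A + (\<Sum>x\<in>S. marg f x A)"
    using submod_sum[OF assms(3) finS SN AN dis] by linarith
  also have "\<dots> \<le> f A + (\<Sum>x\<in>S. f A / real k)"
  proof -
    have "(\<Sum>x\<in>S. marg f x A) \<le> (\<Sum>x\<in>S. f A / real k)"
      by (rule sum_mono) (use mS in blast)
    thus ?thesis by linarith
  qed
  also have "\<dots> = f A + real (card S) * f A / real k" by simp
  also have "\<dots> \<le> 2 * f A" using ck2 by linarith
  finally show ?thesis .
qed

end
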